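(* Let $M\geq 1$, $P=4M-3$, and let $x\in\ell(\mathbb{Z}_P)$ be nonzero with $x[p]=0$ for all $p=M,\ldots,4M-4$. Let $q\in\{0,\ldots,M-1\}$ be the largest index with $x[q]\neq0$. Then the largest index $p\in\{0,\ldots,2M-2\}$ with $\operatorname{CirAut}(x+Rx)[p]\neq0$ is $p=2q$.
   Context: $\ell(\mathbb{Z}_P)$ denotes the space of $P$-periodic functions $u\colon\mathbb{Z}\to\mathbb{C}$, with inner product $\langle u,v\rangle=\sum_{p\in\mathbb{Z}_P}u[p]\overline{v[p]}$. The translation operator is $(T^pu)[p']:=u[p'-p]$ and the reversal operator is $(Ru)[p]:=u[-p]$. The circular autocorrelation is $\operatorname{CirAut}(u)[p]:=\langle u,T^pu\rangle=\sum_{p'\in\mathbb{Z}_P}u[p']\overline{u[p'-p]}$. *)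

theory Defs
  imports Complex_Main
begin

text \<open>Elements of l(Z_P) are represented as functions int => complex that are P-periodic.\<close>

definition periodic :: "int \<Rightarrow> (int \<Rightarrow> complex) \<Rightarrow> bool" where
  "periodic P u \<longleftrightarrow> (\<forall>n. u (n + P) = u n)"

definition inner_P :: "int \<Rightarrow> (int \<Rightarrow> complex) \<Rightarrow> (int \<Rightarrow> complex) \<Rightarrow> complex" where
  "inner_P P u v = (\<Sum>p\<in>{0..<P}. u p * cnj (v p))"

definition transl :: "int \<Rightarrow> (int \<Rightarrow> complex) \<Rightarrow> int \<Rightarrow> complex" where
  "transl p u = (\<lambda>p'. u (p' - p))"

definition revop :: "(int \<Rightarrow> complex) \<Rightarrow> int \<Rightarrow> complex" where
  "revop u = (\<lambda>p. u (- p))"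

definition CirAut :: "int \<Rightarrow> (int \<Rightarrow> complex) \<Rightarrow> int \<Rightarrow> complex" where
  "CirAut P u p = inner_P P u (transl p u)"

end

theory Submission
  imports Defs
begin
lemma per_nat:
  assumes "periodic P x"
  shows "x (m + int k * P) = x m"
proof (induction k arbitrary: m)
  case 0 then show ?case by simp
next
  case (Suc k)
  have "x (m + int (Suc k) * P) = x ((m + int k * P) + P)" by (simp add: algebra_simps)
  also have "\<dots> = x (m + int k * P)" using assms by (simp add: periodic_def)
  finally show ?case using Suc by simp
qed
lemma modP:
  fixes a P :: int
  assumes "0 < P" "-P \<le> a" "a < P"
  shows "a mod P = (if a < 0 then a + P else a)"
proof (cases "a < 0")
  case True
  have "a mod P = (a + P) mod P" by simp
  also have "\<dots> = a + P" using True assms by (intro mod_pos_pos_trivial) auto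
  finally show ?thesis using True by simp
next
  case False
  then show ?thesis using assms by (simp add: mod_pos_pos_trivial)
qed
lemma per_mod:
  assumes "periodic P x" "P > 0"
  shows "x n = x (n mod P)"
proof -
  have d: "n div P * P + n mod P = n" by (rule div_mult_mod_eq)
  show ?thesis
  proof (cases "n div P \<ge> 0")
    case True
    have e: "int (nat (n div P)) = n div P" using True by simp
    have f: "n = n mod P + int (nat (n div P)) * P" unfolding e using d by (simp only: add.commute)
    have "x (n mod P + int (nat (n div P)) * P) = x (n mod P)" by (rule per_nat[OF assms(1)])
    then show ?thesis using f by metis
  next
    case False
    have e: "int (nat (- (n div P))) = - (n div P)" using False by simp
    have f: "n mod P = n + int (nat (- (n div P))) * P" unfolding e using d by (metis add_diff_cancel_left' diff_minus_eq_add minus_mult_left add.commute)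
    have "x (n + int (nat (- (n div P))) * P) = x n" by (rule per_nat[OF assms(1)])
    then show ?thesis using f by metis
  qed
qed
theorem lemma3:
  fixes M P q :: int and x :: "int \<Rightarrow> complex"
  assumes "M \<ge> 1" and "P = 4 * M - 3"
    and "periodic P x"
    and "x \<noteq> (\<lambda>_. 0)"
    and "\<forall>p. M \<le> p \<and> p \<le> 4 * M - 4 \<longrightarrow> x p = 0"
    and "0 \<le> q" and "q \<le> M - 1" and "x q \<noteq> 0"
    and "\<forall>p. q < p \<and> p \<le> M - 1 \<longrightarrow> x p = 0"
  shows "CirAut P (\<lambda>n. x n + revop x n) (2 * q) \<noteq> 0
    \<and> (\<forall>p. 2 * q < p \<and> p \<le> 2 * M - 2 \<longrightarrow> CirAut P (\<lambda>n. x n + revop x n) p = 0)"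
proof -
  define y where "y = (\<lambda>n. x n + revop x n)"
  have P0: "P > 0" using assms by simp
  have supp0: "x m = 0" if "0 \<le> m" "m < P" "q < m" for m
    using assms that by (cases "m \<le> M - 1") auto
  have suppx: "n mod P \<le> q" if "x n \<noteq> 0" for n
  proof (rule ccontr)
    assume "\<not> n mod P \<le> q"
    then have "x (n mod P) = 0" using supp0 P0 by simp
    then show False using that per_mod[OF assms(3) P0] by simp
  qed
  have suppy: "n mod P \<le> q \<or> (- n) mod P \<le> q" if "y n \<noteq> 0" for n
    using that suppx unfolding y_def revop_def by (metis add.left_neutral add.right_neutral)
  have CA: "CirAut P (\<lambda>n. x n + revop x n) p = (\<Sum>n\<in>{0..<P}. y n * cnj (y (n - p)))" for p
    by (simp add: CirAut_def inner_P_def transl_def y_def)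
  have part2: "CirAut P (\<lambda>n. x n + revop x n) p = 0" if p: "2 * q < p" "p \<le> 2 * M - 2" for p
  proof -
    have "y n * cnj (y (n - p)) = 0" if n: "n \<in> {0..<P}" for n
    proof (rule ccontr)
      assume "y n * cnj (y (n - p)) \<noteq> 0"
      then have a: "y n \<noteq> 0" and b: "y (n - p) \<noteq> 0" by auto
      have m1: "n mod P = n" using n P0 by (simp add: modP)
      have m2: "(-n) mod P = (if -n < 0 then -n + P else -n)" using n P0 by (intro modP) auto
      have m3: "(n-p) mod P = (if n-p < 0 then n-p + P else n-p)" using n P0 p assms by (intro modP) auto
      have m4: "(-(n-p)) mod P = (if -(n-p) < 0 then -(n-p) + P else -(n-p))" using n P0 p assms by (intro modP) auto
      have A: "n \<le> q \<or> (if -n < 0 then -n + P else -n) \<le> q" using suppy[OF a] m1 m2 by simp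
      have B: "(if n-p < 0 then n-p + P else n-p) \<le> q \<or> (if -(n-p) < 0 then -(n-p) + P else -(n-p)) \<le> q"
        using suppy[OF b] m3 m4 by simp
      have n': "0 \<le> n" "n < P" using n by auto
      from A B n' p assms(1,2,6,7) show False
        by (auto split: if_split_asm)
    qed
    then show ?thesis unfolding CA by (intro sum.neutral) auto
  qed
  have yq: "y q \<noteq> 0" and ymq: "y (-q) \<noteq> 0"
  proof -
    have "q = 0 \<or> x (-q) = 0"
    proof (cases "q = 0")
      case False
      have "(-q) mod P = -q + P" using P0 assms False by (subst modP) auto
      then have "x (-q) = x (-q + P)" using per_mod[OF assms(3) P0, of "-q"] by simp
      also have "\<dots> = 0" using assms False by auto
      finally show ?thesis by simp
    qed simp
    then show "y q \<noteq> 0" "y (-q) \<noteq> 0" using assms(8) unfolding y_def revop_def by auto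
  qed
  have part1: "CirAut P (\<lambda>n. x n + revop x n) (2 * q) \<noteq> 0"
  proof -
    have z: "y n * cnj (y (n - 2*q)) = 0" if n: "n \<in> {0..<P}" "n \<noteq> q" for n
    proof (rule ccontr)
      assume "y n * cnj (y (n - 2*q)) \<noteq> 0"
      then have a: "y n \<noteq> 0" and b: "y (n - 2*q) \<noteq> 0" by auto
      have m1: "n mod P = n" using n P0 by (simp add: modP)
      have m2: "(-n) mod P = (if -n < 0 then -n + P else -n)" using n P0 by (intro modP) auto
      have m3: "(n-2*q) mod P = (if n-2*q < 0 then n-2*q + P else n-2*q)" using n P0 assms by (intro modP) auto
      have m4: "(-(n-2*q)) mod P = (if -(n-2*q) < 0 then -(n-2*q) + P else -(n-2*q))" using n P0 assms by (intro modP) auto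
      have A: "n \<le> q \<or> (if -n < 0 then -n + P else -n) \<le> q" using suppy[OF a] m1 m2 by simp
      have B: "(if n-2*q < 0 then n-2*q + P else n-2*q) \<le> q \<or> (if -(n-2*q) < 0 then -(n-2*q) + P else -(n-2*q)) \<le> q"
        using suppy[OF b] m3 m4 by simp
      have n': "0 \<le> n" "n < P" "n \<noteq> q" using n by auto
      from A B n' assms(1,2,6,7) show False
        by (auto split: if_split_asm)
    qed
    have qin: "q \<in> {0..<P}" using assms by auto
    have "(\<Sum>n\<in>{0..<P}. y n * cnj (y (n - 2*q))) = y q * cnj (y (q - 2*q))"
    proof -
      have r: "(\<Sum>n\<in>{0..<P}-{q}. y n * cnj (y (n - 2*q))) = 0" using z by (intro sum.neutral) auto
      have "(\<Sum>n\<in>{0..<P}. y n * cnj (y (n - 2*q))) = y q * cnj (y (q - 2*q)) + (\<Sum>n\<in>{0..<P}-{q}. y n * cnj (y (n - 2*q)))"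
        using qin by (intro sum.remove) auto
      then show ?thesis using r by simp
    qed
    also have "\<dots> \<noteq> 0" using yq ymq by simp
    finally show ?thesis unfolding CA .
  qed
  show ?thesis using part1 part2 by blast
qed

end
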